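(* Let $A\subseteq\mathbb Z^d$ be a finite set containing $0$ such that the subgroup $\langle A\rangle$ generated by $A$ has rank $d$. If $A$ is individually $C$-incompressible, then $C>d$.
   Context: A finite set $A\subseteq\mathbb Z^d$ with $0\in A$ is individually $C$-incompressible if for every sequence of translates $\{A+u_i\}_{i=1}^I$ with $u_i\notin\bigcup_{j<i}(A+u_j)$ for all $i$, the number of sets $A+u_i$ containing $0$ is at most $C$. *)

theory Defs
  imports "HOL-Analysis.Analysis"
begin

text \<open>Points of Z^d are modelled as vectors of type int^'n, with d = CARD('n).\<close>

text \<open>The translate A + u.\<close>
definition translate :: "(int ^ 'n) set \<Rightarrow> int ^ 'n \<Rightarrow> (int ^ 'n) set" where
  "translate A u = (\<lambda>a. a + u) ` A"

text \<open>Individual C-incompressibility: for every finite sequence of translates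
  A + u_0, ..., A + u_(I-1) with u_i not in the union of the earlier translates,
  the number of translates containing 0 is at most C.\<close>
definition indiv_incompressible :: "(int ^ 'n) set \<Rightarrow> real \<Rightarrow> bool" where
  "indiv_incompressible A C \<longleftrightarrow>
     (\<forall>(I::nat) (u::nat \<Rightarrow> int ^ 'n).
        (\<forall>i<I. u i \<notin> (\<Union>j<i. translate A (u j))) \<longrightarrow>
        real (card {i. i < I \<and> (0::int^'n) \<in> translate A (u i)}) \<le> C)"

text \<open>The subgroup of Z^d generated by A (integer linear combinations).\<close>
definition gen_subgroup :: "(int ^ 'n) set \<Rightarrow> (int ^ 'n) set" where
  "gen_subgroup A = {(\<Sum>a\<in>F. c a *s a) | F c. finite F \<and> F \<subseteq> A}"

text \<open>Z-linear independence of a finite set of vectors.\<close>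
definition int_independent :: "(int ^ 'n) set \<Rightarrow> bool" where
  "int_independent S \<longleftrightarrow> finite S \<and>
     (\<forall>c. (\<Sum>a\<in>S. c a *s a) = 0 \<longrightarrow> (\<forall>a\<in>S. c a = (0::int)))"

text \<open>Rank of a subgroup H of Z^d: maximal size of a Z-independent subset.\<close>
definition group_rank :: "(int ^ 'n) set \<Rightarrow> nat" where
  "group_rank H = Max {card S | S. S \<subseteq> H \<and> int_independent S}"

end

theory Submission
  imports Defs
begin

definition qv :: "int^'n \<Rightarrow> rat^'n" where "qv v = (\<chi> i. of_int (v$i))"

lemma qv_add: "qv (x + y) = qv x + qv y" by (simp add: qv_def vec_eq_iff)
lemma qv_diff: "qv (x - y) = qv x - qv y" by (simp add: qv_def vec_eq_iff)
lemma qv_zero: "qv 0 = 0" by (simp add: qv_def vec_eq_iff)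
lemma qv_smult: "qv (c *s x) = of_int c *s qv x" by (simp add: qv_def vec_eq_iff)
lemma qv_sum: "qv (\<Sum>a\<in>F. f a) = (\<Sum>a\<in>F. qv (f a))"
  by (induction F rule: infinite_finite_induct) (auto simp: qv_zero qv_add)
lemma qv_inj: "inj qv"
  by (rule injI) (simp add: qv_def vec_eq_iff)

lemma clear_denoms:
  fixes q :: "'a \<Rightarrow> rat"
  assumes "finite S" shows "\<exists>d::int. d > 0 \<and> (\<forall>s\<in>S. of_int d * q s \<in> \<int>)"
  using assms
proof (induction rule: finite_induct)
  case empty then show ?case by (intro exI[of _ 1]) auto
next
  case (insert x F)
  then obtain d where d: "d > 0" "\<forall>s\<in>F. of_int d * q s \<in> \<int>" by auto
  obtain n m where nm: "quotient_of (q x) = (n, m)" by (cases "quotient_of (q x)") auto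
  have m: "m > 0" using quotient_of_denom_pos[OF nm] .
  have qx: "q x = of_int n / of_int m" using quotient_of_div[OF nm] .
  have "of_int (d * m) * q x = of_int (d * n)" using m by (simp add: qx)
  moreover have "of_int (d * m) * q s \<in> \<int>" if "s \<in> F" for s
  proof -
    have "of_int (d * m) * q s = of_int m * (of_int d * q s)" by simp
    then show ?thesis using d(2) that by (metis Ints_mult Ints_of_int)
  qed
  ultimately show ?case using d m
    by (intro exI[of _ "d*m"]) (auto simp del: of_int_mult)
qed

lemma int_indep_rat_indep:
  assumes "int_independent S" shows "vec.independent (qv ` S)"
proof (rule ccontr)
  have fin: "finite S" using assms unfolding int_independent_def by auto
  assume "\<not> vec.independent (qv ` S)"
  then obtain u where u: "\<exists>v\<in>qv ` S. u v \<noteq> 0" "(\<Sum>v\<in>qv ` S. u v *s v) = 0"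
    using vec.dependent_finite[of "qv ` S"] fin by auto
  have inj: "inj_on qv S" using qv_inj inj_on_subset by blast
  have s0: "(\<Sum>s\<in>S. u (qv s) *s qv s) = 0"
    using u(2) by (simp add: sum.reindex[OF inj])
  obtain d where d: "d > 0" "\<forall>s\<in>S. of_int d * u (qv s) \<in> \<int>"
    using clear_denoms[OF fin, of "\<lambda>s. u (qv s)"] by auto
  define c where "c s = \<lfloor>of_int d * u (qv s)\<rfloor>" for s
  have c: "of_int (c s) = of_int d * u (qv s)" if "s \<in> S" for s
    using d(2) that unfolding c_def by (metis Ints_cases floor_of_int)
  have "qv (\<Sum>s\<in>S. c s *s s) = (\<Sum>s\<in>S. of_int (c s) *s qv s)"
    by (simp add: qv_sum qv_smult)
  also have "\<dots> = (\<Sum>s\<in>S. of_int d *s (u (qv s) *s qv s))"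
    by (rule sum.cong) (auto simp: c vector_smult_assoc)
  also have "\<dots> = of_int d *s (\<Sum>s\<in>S. u (qv s) *s qv s)"
    by (simp add: vec.scale_sum_right)
  also have "\<dots> = qv 0" using s0 by (simp add: qv_zero)
  finally have "(\<Sum>s\<in>S. c s *s s) = 0" using qv_inj by (auto dest: injD)
  then have "\<forall>s\<in>S. c s = 0" using assms unfolding int_independent_def by auto
  then have "\<forall>s\<in>S. u (qv s) = 0" using c d(1) by (metis mult_eq_0_iff of_int_0 of_int_eq_0_iff less_irrefl)
  then show False using u(1) by auto
qed


lemma int_indep_card:
  assumes "int_independent (S :: (int^'n) set)" shows "card S \<le> CARD('n)"
proof -
  have inj: "inj_on qv S" using qv_inj inj_on_subset by blast
  have "card S = card (qv ` S)" using card_image[OF inj] by simp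
  also have "\<dots> \<le> vec.dim (UNIV :: (rat^'n) set)"
    using vec.independent_card_le_dim[of "qv ` S" UNIV] int_indep_rat_indep[OF assms] by auto
  also have "\<dots> = CARD('n)" using vec.dim_UNIV card_cart_basis by metis
  finally show ?thesis .
qed

lemma rank_set:
  assumes "group_rank (H :: (int^'n) set) = CARD('n)"
  shows "\<exists>S\<subseteq>H. int_independent S \<and> card S = CARD('n)"
proof -
  define X where "X = {card S | S. S \<subseteq> H \<and> int_independent S}"
  have "X \<subseteq> {..CARD('n)}" unfolding X_def using int_indep_card by auto
  then have fin: "finite X" using finite_subset by blast
  have "int_independent {}" unfolding int_independent_def by auto
  then have "0 \<in> X" unfolding X_def by force
  then have "Max X \<in> X" using Max_in[OF fin] by auto
  moreover have "Max X = CARD('n)" using assms unfolding group_rank_def X_def by simp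
  ultimately show ?thesis unfolding X_def by auto
qed

lemma span_full:
  fixes A :: "(int^'n) set"
  assumes "group_rank (gen_subgroup A) = CARD('n)"
  shows "vec.span (qv ` A) = UNIV"
proof -
  obtain S where S: "S \<subseteq> gen_subgroup A" "int_independent S" "card S = CARD('n)"
    using rank_set[OF assms] by auto
  have sub: "qv ` S \<subseteq> vec.span (qv ` A)"
  proof
    fix x assume "x \<in> qv ` S"
    then obtain s where s: "s \<in> gen_subgroup A" "x = qv s" using S(1) by auto
    then obtain F c where F: "finite F" "F \<subseteq> A" "s = (\<Sum>a\<in>F. c a *s a)"
      unfolding gen_subgroup_def by auto
    have "x = (\<Sum>a\<in>F. of_int (c a) *s qv a)" using s F by (simp add: qv_sum qv_smult)
    also have "\<dots> \<in> vec.span (qv ` A)"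
      by (rule vec.span_sum) (use F in \<open>auto intro: vec.span_scale vec.span_base\<close>)
    finally show "x \<in> vec.span (qv ` A)" .
  qed
  have inj: "inj_on qv S" using qv_inj inj_on_subset by blast
  have "CARD('n) = card (qv ` S)" using card_image[OF inj] S(3) by simp
  also have "\<dots> \<le> vec.dim (vec.span (qv ` A))"
    using vec.independent_card_le_dim[OF sub int_indep_rat_indep[OF S(2)]] .
  finally have "CARD('n) \<le> vec.dim (qv ` A)" by simp
  moreover have "vec.dim (qv ` A) \<le> vec.dim (UNIV :: (rat^'n) set)"
    by (rule vec.dim_subset) simp
  ultimately have "vec.dim (qv ` A) = card (cart_basis :: (rat^'n) set)"
    using vec.dim_UNIV card_cart_basis by (metis le_antisym)
  then show ?thesis using vec.dim_eq_full vec.dimension_def by metis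
qed


lemma exists_max:
  fixes f :: "'a \<Rightarrow> rat"
  assumes "finite T" "T \<noteq> {}" shows "\<exists>y\<in>T. \<forall>x\<in>T. f x \<le> f y"
proof -
  have "Max (f ` T) \<in> f ` T" using assms by simp
  then obtain y where "y \<in> T" "f y = Max (f ` T)" by auto
  then show ?thesis using assms by (metis Max_ge finite_imageI imageI)
qed

lemma one_step:
  fixes T :: "(rat^'n) set" and B :: "(rat^'n) set"
  assumes fin: "finite T" and ne: "T \<noteq> {}" and ind: "vec.independent B"
  shows "\<exists>y\<in>T. (\<forall>x\<in>B. y - x \<notin> T) \<and> (\<not> T \<subseteq> vec.span B \<longrightarrow> y \<notin> vec.span B)"
proof (cases "T \<subseteq> vec.span B")
  case True
  define onev where "onev = ((\<chi> i. 1) :: rat^'n)"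
  define i0 where "i0 = (undefined :: 'n)"
  obtain g where g: "Vector_Spaces.linear (*s) (*s) g" "\<forall>x\<in>B. g x = - onev"
    using vec.linear_independent_extend[OF ind, of "\<lambda>_. - onev"] by auto
  define f where "f x = g x $ i0" for x
  obtain y where y: "y \<in> T" "\<forall>x\<in>T. f x \<le> f y" using exists_max[OF fin ne, of f] by auto
  have "y - x \<notin> T" if "x \<in> B" for x
  proof
    assume "y - x \<in> T"
    then have "f (y - x) \<le> f y" using y by auto
    moreover have "f (y - x) = f y + 1"
      using vec.linear_diff[OF g(1)] g(2) that unfolding f_def onev_def by simp
    ultimately show False by simp
  qed
  then show ?thesis using y True by auto
next
  case False
  then obtain a where a: "a \<in> T" "a \<notin> vec.span B" by auto
  have aB: "a \<notin> B" using a vec.span_base by blast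
  have ind': "vec.independent (insert a B)" by (simp add: vec.independent_insert ind a aB)
  define onev where "onev = ((\<chi> i. 1) :: rat^'n)"
  define i0 where "i0 = (undefined :: 'n)"
  obtain g1 where g1: "Vector_Spaces.linear (*s) (*s) g1"
      "\<forall>x\<in>insert a B. g1 x = (if x = a then 0 else - onev)"
    using vec.linear_independent_extend[OF ind', of "\<lambda>x. if x = a then 0 else - onev"] by blast
  obtain g2 where g2: "Vector_Spaces.linear (*s) (*s) g2"
      "\<forall>x\<in>insert a B. g2 x = (if x = a then onev else 0)"
    using vec.linear_independent_extend[OF ind', of "\<lambda>x. if x = a then onev else 0"] by blast
  define N where "N = 1 + (\<Sum>x\<in>T. \<bar>g1 x $ i0\<bar>)"
  define f where "f x = g1 x $ i0 + N * g2 x $ i0" for x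
  obtain y where y: "y \<in> T" "\<forall>x\<in>T. f x \<le> f y" using exists_max[OF fin ne, of f] by auto
  have fdiff: "f (u - v) = f u - f v" for u v
  proof -
    have e1: "g1 (u - v) $ i0 = g1 u $ i0 - g1 v $ i0"
      using vec.linear_diff[OF g1(1)] by simp
    have e2: "g2 (u - v) $ i0 = g2 u $ i0 - g2 v $ i0"
      using vec.linear_diff[OF g2(1)] by simp
    show ?thesis unfolding f_def e1 e2 by (simp add: algebra_simps)
  qed
  have "y - x \<notin> T" if "x \<in> B" for x
  proof
    assume "y - x \<in> T"
    then have "f (y - x) \<le> f y" using y by auto
    moreover have "f x = -1"
      using g1(2) g2(2) that aB unfolding f_def onev_def by auto
    ultimately show False using fdiff by simp
  qed
  moreover have "y \<notin> vec.span B"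
  proof
    assume ys: "y \<in> vec.span B"
    have "g2 y = 0" by (rule vec.linear_eq_0_on_span[OF g2(1) _ ys]) (use g2(2) aB in auto)
    then have "f y = g1 y $ i0" unfolding f_def by simp
    also have "\<dots> \<le> \<bar>g1 y $ i0\<bar>" by simp
    also have "\<dots> \<le> (\<Sum>x\<in>T. \<bar>g1 x $ i0\<bar>)"
      by (rule member_le_sum) (use y fin in auto)
    also have "\<dots> < N" unfolding N_def by simp
    also have "N = f a" using g1(2) g2(2) unfolding f_def onev_def by simp
    finally have "f y < f a" .
    then show False using y a by force
  qed
  ultimately show ?thesis using y by auto
qed


lemma chain_k:
  fixes T :: "(rat^'n) set"
  assumes fin: "finite T" and ne: "T \<noteq> {}" and sp: "vec.span T = UNIV"
  shows "k \<le> CARD('n) \<Longrightarrow> \<exists>b. (\<forall>l<k. b l \<in> T \<and> (\<forall>j<l. b l - b j \<notin> T))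
           \<and> inj_on b {..<k} \<and> vec.independent (b ` {..<k})"
proof (induction k)
  case 0 then show ?case by (auto simp: vec.independent_empty)
next
  case (Suc k)
  then obtain b where b: "\<forall>l<k. b l \<in> T \<and> (\<forall>j<l. b l - b j \<notin> T)"
     "inj_on b {..<k}" "vec.independent (b ` {..<k})" by auto
  define B where "B = b ` {..<k}"
  have cardB: "card B = k" unfolding B_def using card_image[OF b(2)] by simp
  have "\<not> T \<subseteq> vec.span B"
  proof
    assume "T \<subseteq> vec.span B"
    then have "vec.span T \<subseteq> vec.span B"
      using vec.span_minimal vec.subspace_span by blast
    then have "cart_basis \<subseteq> vec.span B" using sp by auto
    then have "card (cart_basis :: (rat^'n) set) \<le> card B"
      using vec.independent_span_bound[of B cart_basis] independent_cart_basis
      unfolding B_def by auto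
    then show False using cardB Suc.prems card_cart_basis by (metis Suc_le_eq not_less)
  qed
  then obtain y where y: "y \<in> T" "\<forall>x\<in>B. y - x \<notin> T" "y \<notin> vec.span B"
    using one_step[OF fin ne b(3)[folded B_def]] by auto
  have yB: "y \<notin> B" using y(3) vec.span_base by blast
  define b' where "b' = b(k := y)"
  have img: "b' ` {..<Suc k} = insert y B"
    unfolding b'_def B_def lessThan_Suc by auto
  have "\<forall>l<Suc k. b' l \<in> T \<and> (\<forall>j<l. b' l - b' j \<notin> T)"
  proof (rule allI, rule impI, rule conjI)
    fix l assume l: "l < Suc k"
    show "b' l \<in> T" using l b(1) y(1) unfolding b'_def by (cases "l = k") auto
    show "\<forall>j<l. b' l - b' j \<notin> T"
    proof (cases "l = k")
      case True then show ?thesis using y(2) unfolding b'_def B_def by auto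
    next
      case False then show ?thesis using l b(1) unfolding b'_def by auto
    qed
  qed
  moreover have "inj_on b' {..<Suc k}"
    using b(2) yB unfolding b'_def B_def lessThan_Suc inj_on_def by auto
  moreover have "vec.independent (b' ` {..<Suc k})"
    unfolding img using b(3) y(3) yB by (simp add: vec.independent_insert B_def)
  ultimately show ?case by blast
qed

lemma chain_full:
  fixes T :: "(rat^'n) set"
  assumes fin: "finite T" and ne: "T \<noteq> {}" and sp: "vec.span T = UNIV"
  shows "\<exists>b. \<forall>l\<le>CARD('n). b l \<in> T \<and> (\<forall>j<l. b l - b j \<notin> T)"
proof -
  obtain b where b: "\<forall>l<CARD('n). b l \<in> T \<and> (\<forall>j<l. b l - b j \<notin> T)"
     "vec.independent (b ` {..<CARD('n)})"
    using chain_k[OF assms, of "CARD('n)"] by auto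
  obtain y where y: "y \<in> T" "\<forall>x\<in>b ` {..<CARD('n)}. y - x \<notin> T"
    using one_step[OF fin ne b(2)] by auto
  define b' where "b' = b(CARD('n) := y)"
  have "\<forall>l\<le>CARD('n). b' l \<in> T \<and> (\<forall>j<l. b' l - b' j \<notin> T)"
  proof (rule allI, rule impI, rule conjI)
    fix l assume l: "l \<le> CARD('n)"
    show "b' l \<in> T" using l b(1) y(1) unfolding b'_def by (cases "l = CARD('n)") auto
    show "\<forall>j<l. b' l - b' j \<notin> T"
    proof (cases "l = CARD('n)")
      case True then show ?thesis using y(2) unfolding b'_def by auto
    next
      case False then show ?thesis using l b(1) unfolding b'_def by auto
    qed
  qed
  then show ?thesis by blast
qed

theorem proposition2p7:
  fixes A :: "(int ^ 'n) set" and C :: real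
  assumes "finite A" and "0 \<in> A"
    and "group_rank (gen_subgroup A) = CARD('n)"
    and "indiv_incompressible A C"
  shows "C > real CARD('n)"
proof -
  define d where "d = CARD('n)"
  have sp: "vec.span (qv ` A) = UNIV" using span_full[OF assms(3)] .
  obtain b where b: "\<forall>l\<le>d. b l \<in> qv ` A \<and> (\<forall>j<l. b l - b j \<notin> qv ` A)"
    using chain_full[OF finite_imageI[OF assms(1)] _ sp] assms(2) unfolding d_def by blast
  define a where "a l = inv_into A qv (b l)" for l
  have a: "a l \<in> A" "qv (a l) = b l" if "l \<le> d" for l
    using b that unfolding a_def by (auto simp: inv_into_into f_inv_into_f)
  have adiff: "a l - a j \<notin> A" if "l \<le> d" "j < l" for l j
  proof
    assume "a l - a j \<in> A"
    then have "qv (a l - a j) \<in> qv ` A" by blast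
    then have "b l - b j \<in> qv ` A" using a that by (simp add: qv_diff)
    then show False using b that by auto
  qed
  define u where "u i = - a (d - i)" for i
  have cond: "\<forall>i<Suc d. u i \<notin> (\<Union>j<i. translate A (u j))"
  proof (intro allI impI)
    fix i assume i: "i < Suc d"
    show "u i \<notin> (\<Union>j<i. translate A (u j))"
    proof
      assume "u i \<in> (\<Union>j<i. translate A (u j))"
      then obtain j x where j: "j < i" "x \<in> A" "u i = x + u j"
        unfolding translate_def by auto
      then have "x = a (d - j) - a (d - i)" unfolding u_def by (simp add: algebra_simps)
      then show False using adiff[of "d - j" "d - i"] j i by auto
    qed
  qed
  have "{i. i < Suc d \<and> (0::int^'n) \<in> translate A (u i)} = {..<Suc d}"
  proof -
    have "0 \<in> translate A (u i)" if "i < Suc d" for i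
    proof -
      have "a (d - i) \<in> A" using a by simp
      moreover have "(0::int^'n) = a (d - i) + u i" unfolding u_def by simp
      ultimately show ?thesis unfolding translate_def by blast
    qed
    then show ?thesis by auto
  qed
  then have "real (Suc d) \<le> C"
    using assms(4) cond unfolding indiv_incompressible_def
    by (metis card_lessThan)
  then show ?thesis unfolding d_def by simp
qed

end
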